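(* Let $(\mathcal V,\mathcal W,\lambda)$ be a FTvN system where $\mathcal V$ is finite dimensional with $\dim(\mathcal V)\ge 2$, and suppose that for $x,y\in\mathcal V$, $0=\langle x,y\rangle=\langle\lambda(x),\lambda(y)\rangle$ implies $x=0$ or $y=0$. Then $\{0\}$ and $\mathcal V$ are the only spectral cones in $\mathcal V$. Consequently, for any nonzero $u\in\mathcal V$, the convex cone generated by $[u]$ equals $\mathcal V$.
   Context: A Fan-Theobald-von Neumann (FTvN) system is a triple $(\mathcal V,\mathcal W,\lambda)$ where $\mathcal V,\mathcal W$ are real inner product spaces and $\lambda:\mathcal V\to\mathcal W$ is a map such that: (A1) $\|\lambda(x)\|=\|x\|$ for all $x$; (A2) $\langle x,y\rangle\le\langle\lambda(x),\lambda(y)\rangle$ for all $x,y$; (A3) for every $c\in\mathcal V$ and $q\in\lambda(\mathcal V)$ there exists $x$ with $\lambda(x)=q$ and $\langle c,x\rangle=\langle\lambda(c),\lambda(x)\rangle$. The $\lambda$-orbit of $u$ is $[u]=\{x:\lambda(x)=\lambda(u)\}$; a set $E$ is spectral if $x\in E\Rightarrow[x]\subseteq E$. A spectral cone is a (nonempty) spectral set that is also a convex cone. *)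

theory Defs
  imports "HOL-Analysis.Analysis"
begin

definition ftvn :: "('v::real_inner \<Rightarrow> 'w::real_inner) \<Rightarrow> bool" where
  "ftvn lam \<longleftrightarrow>
     (\<forall>x. norm (lam x) = norm x) \<and>
     (\<forall>x y. inner x y \<le> inner (lam x) (lam y)) \<and>
     (\<forall>c q. q \<in> range lam \<longrightarrow> (\<exists>x. lam x = q \<and> inner c x = inner (lam c) (lam x)))"

definition orbit :: "('v \<Rightarrow> 'w) \<Rightarrow> 'v \<Rightarrow> 'v set" where
  "orbit lam u = {x. lam x = lam u}"

definition spectral :: "('v \<Rightarrow> 'w) \<Rightarrow> 'v set \<Rightarrow> bool" where
  "spectral lam E \<longleftrightarrow> (\<forall>x\<in>E. orbit lam x \<subseteq> E)"

definition spectral_cone :: "('v::real_vector \<Rightarrow> 'w) \<Rightarrow> 'v set \<Rightarrow> bool" where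
  "spectral_cone lam E \<longleftrightarrow> spectral lam E \<and> convex_cone E"

end

theory Submission
  imports Defs
begin

lemma key_pos:
  fixes lam :: "'v::euclidean_space \<Rightarrow> 'w::real_inner"
  assumes F: "ftvn lam"
    and D: "DIM('v) \<ge> 2"
    and H: "\<And>x y. inner x y = 0 \<Longrightarrow> inner (lam x) (lam y) = 0 \<Longrightarrow> x = 0 \<or> y = 0"
    and x0: "x \<noteq> 0" and c0: "c \<noteq> 0"
  shows "0 < inner (lam c) (lam x)"
proof -
  have A1: "\<And>x. norm (lam x) = norm x" and A2: "\<And>x y. inner x y \<le> inner (lam x) (lam y)"
    and A3: "\<And>c q. q \<in> range lam \<Longrightarrow> \<exists>x. lam x = q \<and> inner c x = inner (lam c) (lam x)"
    using F unfolding ftvn_def by auto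
  define f where "f c = inner (lam c) (lam x)" for c
  have sub: "f (a + b) \<le> f a + f b" for a b
  proof -
    obtain z where z: "lam z = lam x" "inner (a + b) z = inner (lam (a+b)) (lam z)"
      using A3[of "lam x" "a+b"] by auto
    have "f (a+b) = inner a z + inner b z" using z by (simp add: f_def inner_add_left)
    also have "\<dots> \<le> f a + f b" using A2[of a z] A2[of b z] z by (simp add: f_def)
    finally show ?thesis .
  qed
  have bnd: "f a \<le> norm a * norm x" for a
    using norm_cauchy_schwarz[of "lam a" "lam x"] A1 by (simp add: f_def)
  have lip: "dist (f a) (f b) \<le> norm x * dist a b" for a b
  proof -
    have "f a \<le> f b + norm x * dist a b"
      using sub[of b "a - b"] bnd[of "a - b"] by (simp add: dist_norm mult.commute)
    moreover have "f b \<le> f a + norm x * dist a b"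
      using sub[of a "b - a"] bnd[of "b - a"] by (simp add: dist_norm norm_minus_commute mult.commute)
    ultimately show ?thesis by (simp add: dist_real_def abs_le_iff)
  qed
  have cont: "continuous_on UNIV f"
    by (rule lipschitz_on_continuous_on[of "norm x"], rule lipschitz_onI) (use lip in auto)
  have f0: "f 0 = 0" using A1[of 0] by (simp add: f_def)
  have neg: "f (- a) \<ge> - f a" for a using sub[of a "-a"] f0 by simp
  have nz: "f r \<noteq> 0" if "r \<noteq> 0" for r
  proof
    assume fr: "f r = 0"
    obtain z where z: "lam z = lam x" "inner r z = inner (lam r) (lam z)"
      using A3[of "lam x" r] by auto
    have "inner r z = 0" "inner (lam r) (lam z) = 0" using z fr by (auto simp: f_def)
    then have "z = 0" using H that by blast
    then show False using A1[of z] A1[of x] z x0 by simp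
  qed
  show ?thesis
  proof (rule ccontr)
    assume "\<not> ?thesis"
    then have "f c \<le> 0" by (simp add: f_def)
    moreover have "0 \<le> f (-c)" using neg[of c] \<open>f c \<le> 0\<close> by simp
    moreover have conn: "connected (f ` (- {0}))"
      by (rule connected_continuous_image[OF continuous_on_subset[OF cont]])
         (auto intro: connected_punctured_universe[OF D])
    moreover have "f c \<in> f ` (- {0})" "f (-c) \<in> f ` (- {0})" using c0 by auto
    ultimately have "0 \<in> f ` (- {0})" unfolding connected_iff_interval by blast
    then show False using nz by force
  qed
qed

lemma hull_univ:
  fixes S :: "'v::euclidean_space set"
  assumes "\<And>c. c \<noteq> 0 \<Longrightarrow> \<exists>z\<in>S. 0 < inner c z"
  shows "convex_cone hull S = UNIV"
proof (rule ccontr)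
  define K where "K = convex_cone hull S"
  assume "convex_cone hull S \<noteq> UNIV"
  then have KU: "K \<noteq> UNIV" by (simp add: K_def)
  have cK: "convex K" by (simp add: K_def convex_convex_cone_hull)
  have K0: "0 \<in> K" by (simp add: K_def convex_cone_hull_contains_0)
  have SK: "S \<subseteq> K" by (simp add: K_def hull_subset)
  have "closure K \<noteq> UNIV"
  proof
    assume "closure K = UNIV"
    then have "rel_interior K = UNIV"
      using convex_rel_interior_closure[OF cK] by simp
    then show False using rel_interior_subset[of K] KU by auto
  qed
  then obtain p where p: "p \<notin> closure K" by auto
  obtain a b where ab: "inner a p < b" "\<forall>y\<in>closure K. inner a y > b"
    using separating_hyperplane_closed_point[OF convex_closure[OF cK] closed_closure p] by auto
  have b0: "b < 0" using ab(2) K0 closure_subset by fastforce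
  have a0: "a \<noteq> 0" using ab b0 by auto
  have nn: "inner a y \<ge> 0" if "y \<in> K" for y
  proof (rule ccontr)
    assume "\<not> ?thesis"
    then have ay: "inner a y < 0" by simp
    define t where "t = b / inner a y"
    have t: "t > 0" using ay b0 by (simp add: t_def divide_neg_neg)
    have "t *\<^sub>R y \<in> K" using that t by (simp add: K_def convex_cone_hull_mul)
    then have "inner a (t *\<^sub>R y) > b" using ab(2) closure_subset by blast
    moreover have "inner a (t *\<^sub>R y) = b" using ay by (simp add: t_def)
    ultimately show False by simp
  qed
  obtain z where "z \<in> S" "0 < inner (-a) z" using assms[of "-a"] a0 by auto
  then show False using nn[of z] SK by auto
qed

theorem proposition6p9:
  fixes lam :: "'v::euclidean_space \<Rightarrow> 'w::real_inner"
  assumes "ftvn lam"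
    and "DIM('v) \<ge> 2"
    and "\<And>x y. inner x y = 0 \<Longrightarrow> inner (lam x) (lam y) = 0 \<Longrightarrow> x = 0 \<or> y = 0"
  shows "(\<forall>E. spectral_cone lam E \<longrightarrow> E = {0} \<or> E = UNIV)
    \<and> (\<forall>u. u \<noteq> 0 \<longrightarrow> convex_cone hull (orbit lam u) = UNIV)"
proof -
  have A3: "\<And>c q. q \<in> range lam \<Longrightarrow> \<exists>x. lam x = q \<and> inner c x = inner (lam c) (lam x)"
    using assms(1) unfolding ftvn_def by auto
  have hu: "convex_cone hull (orbit lam u) = UNIV" if "u \<noteq> 0" for u
  proof (rule hull_univ)
    fix c :: 'v assume "c \<noteq> 0"
    then have pos: "0 < inner (lam c) (lam u)" using key_pos[OF assms that] by blast
    obtain z where "lam z = lam u" "inner c z = inner (lam c) (lam z)"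
      using A3[of "lam u" c] by auto
    then show "\<exists>z\<in>orbit lam u. 0 < inner c z" using pos by (auto simp: orbit_def)
  qed
  moreover have "E = {0} \<or> E = UNIV" if "spectral_cone lam E" for E
  proof (cases "E = {0}")
    case False
    have "E \<noteq> {}" using that by (simp add: spectral_cone_def convex_cone_def)
    then obtain u where u: "u \<in> E" "u \<noteq> 0" using False by blast
    have "orbit lam u \<subseteq> E" using that u by (simp add: spectral_cone_def spectral_def)
    then have "convex_cone hull (orbit lam u) \<subseteq> E"
      using that by (simp add: spectral_cone_def hull_minimal)
    then show ?thesis using hu[OF u(2)] by auto
  qed simp
  ultimately show ?thesis by blast
qed

end
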